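(* Consider optimization problem (P2) below, under the standing assumptions. Then every optimal solution $(\bar P_1^*,\bm u_1^*,\bar P_2^*,\bm u_2^* )$ of (P2) has at least one transmitter at full power, i.e. $\bar P_1^*=P_1^{\max}$ or $\bar P_2^*=P_2^{\max}$.
   Context: Setting: two transmitters TX 1 (with $M_1$ antennas) and TX 2 (with $M_2$ antennas), and two single-antenna receivers RX 1, RX 2. For $i,j\in\{1,2\}$ the channel from TX $j$ to RX $i$ is $\bm h_{i,j}\sim\mathcal{CN}(\bm 0_{M_j},\mathbf R_{i,j})$, the four channel vectors being mutually independent, and each covariance $\mathbf R_{i,j}$ is Hermitian positive definite. For $i\in\{1,2\}$, $\bar i$ denotes the other index. The noise variance is $N_0>0$, the power budgets are $P_1^{\max}>0$, $P_2^{\max}>0$, and $\tau_1>0$ satisfies the feasibility condition $\mathbb{E}\big[\log_2\big(1+P_1^{\max}\|\bm h_{1,1}\|^2/N_0\big)\big]\ge\tau_1$. Problem (P2): the optimization variables are constants $\bar P_1\in[0,P_1^{\max}]$, $\bar P_2\in[0,P_2^{\max}]$ and beamformers $\bm u_1=\bm u_1(\bm h_{1,1})\in\mathbb C^{M_1}$, $\bm u_2=\bm u_2(\bm h_{2,2})\in\mathbb C^{M_2}$, where $\bm u_i$ is a measurable function of $\bm h_{i,i}$ only, with $\|\bm u_i\|=1$ almost surely. For $i\in\{1,2\}$ define $$\mathbb{E}\big[\tilde R_i(\bar P_1,\bm u_1,\bar P_2,\bm u_2)\big]=\mathbb{E}\left[\log_2\left(1+\frac{\bar P_i\,|\bm h_{i,i}^{H}\bm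 u_i|^2}{N_0+\bar P_{\bar i}\,\bm u_{\bar i}^{H}\mathbf R_{i,\bar i}\bm u_{\bar i}}\right)\right],$$ the expectation being over $\bm h_{1,1},\bm h_{2,2}$. Problem (P2) is: maximize $\mathbb{E}[\tilde R_2]$ subject to $\mathbb{E}[\tilde R_1]\ge\tau_1$, $0\le\bar P_1\le P_1^{\max}$, $0\le\bar P_2\le P_2^{\max}$, $\|\bm u_1\|=\|\bm u_2\|=1$. *)

theory Defs
  imports "HOL-Analysis.Analysis" "HOL-Probability.Probability"
begin

definition herm_form :: "complex^'m^'m \<Rightarrow> complex^'m \<Rightarrow> complex^'m \<Rightarrow> complex" where
  "herm_form A x y = (\<Sum>i\<in>UNIV. \<Sum>j\<in>UNIV. cnj (x$i) * A$i$j * y$j)"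

definition cdot :: "complex^'m \<Rightarrow> complex^'m \<Rightarrow> complex" where
  "cdot x y = (\<Sum>i\<in>UNIV. cnj (x$i) * y$i)"

definition hermitian :: "complex^'m^'m \<Rightarrow> bool" where
  "hermitian A \<longleftrightarrow> (\<forall>i j. A$i$j = cnj (A$j$i))"

definition hermitian_pd :: "complex^'m^'m \<Rightarrow> bool" where
  "hermitian_pd A \<longleftrightarrow> hermitian A \<and> (\<forall>x. x \<noteq> 0 \<longrightarrow> Re (herm_form A x x) > 0)"

(* circularly-symmetric complex Gaussian CN(0,R) on C^M, via its density
   f(h) = exp(-h^H R^{-1} h) / (pi^M det R) w.r.t. Lebesgue measure on C^M = R^{2M} *)
definition CN :: "complex^'m^'m \<Rightarrow> (complex^'m) measure" where
  "CN R = density lborel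
     (\<lambda>h. ennreal (exp (- Re (herm_form (matrix_inv R) h h)) / (pi ^ CARD('m) * Re (det R))))"

definition ER1 ::
  "complex^'m^'m \<Rightarrow> complex^'n^'n \<Rightarrow> complex^'n^'n \<Rightarrow> real \<Rightarrow>
   real \<Rightarrow> (complex^'m \<Rightarrow> complex^'m) \<Rightarrow> real \<Rightarrow> (complex^'n \<Rightarrow> complex^'n) \<Rightarrow> real" where
  "ER1 R11 R22 R12 N0 P1 u1 P2 u2 =
     (\<integral>hh. log 2 (1 + P1 * (cmod (cdot (fst hh) (u1 (fst hh))))\<^sup>2
                     / (N0 + P2 * Re (herm_form R12 (u2 (snd hh)) (u2 (snd hh)))))
        \<partial>(CN R11 \<Otimes>\<^sub>M CN R22))"

definition ER2 ::
  "complex^'m^'m \<Rightarrow> complex^'n^'n \<Rightarrow> complex^'m^'m \<Rightarrow> real \<Rightarrow>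
   real \<Rightarrow> (complex^'m \<Rightarrow> complex^'m) \<Rightarrow> real \<Rightarrow> (complex^'n \<Rightarrow> complex^'n) \<Rightarrow> real" where
  "ER2 R11 R22 R21 N0 P1 u1 P2 u2 =
     (\<integral>hh. log 2 (1 + P2 * (cmod (cdot (snd hh) (u2 (snd hh))))\<^sup>2
                     / (N0 + P1 * Re (herm_form R21 (u1 (fst hh)) (u1 (fst hh)))))
        \<partial>(CN R11 \<Otimes>\<^sub>M CN R22))"

definition beamformer :: "complex^'m^'m \<Rightarrow> (complex^'m \<Rightarrow> complex^'m) \<Rightarrow> bool" where
  "beamformer R u \<longleftrightarrow> u \<in> borel_measurable borel \<and> (AE h in CN R. norm (u h) = 1)"

definition P2_feasible ::
  "complex^'m^'m \<Rightarrow> complex^'n^'n \<Rightarrow> complex^'n^'n \<Rightarrow> real \<Rightarrow> real \<Rightarrow> real \<Rightarrow> real \<Rightarrow>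
   real \<Rightarrow> (complex^'m \<Rightarrow> complex^'m) \<Rightarrow> real \<Rightarrow> (complex^'n \<Rightarrow> complex^'n) \<Rightarrow> bool" where
  "P2_feasible R11 R22 R12 N0 P1max P2max \<tau>1 P1 u1 P2 u2 \<longleftrightarrow>
     0 \<le> P1 \<and> P1 \<le> P1max \<and> 0 \<le> P2 \<and> P2 \<le> P2max \<and>
     beamformer R11 u1 \<and> beamformer R22 u2 \<and>
     ER1 R11 R22 R12 N0 P1 u1 P2 u2 \<ge> \<tau>1"

definition P2_optimal ::
  "complex^'m^'m \<Rightarrow> complex^'n^'n \<Rightarrow> complex^'n^'n \<Rightarrow> complex^'m^'m \<Rightarrow>
   real \<Rightarrow> real \<Rightarrow> real \<Rightarrow> real \<Rightarrow>
   real \<Rightarrow> (complex^'m \<Rightarrow> complex^'m) \<Rightarrow> real \<Rightarrow> (complex^'n \<Rightarrow> complex^'n) \<Rightarrow> bool" where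
  "P2_optimal R11 R22 R12 R21 N0 P1max P2max \<tau>1 P1 u1 P2 u2 \<longleftrightarrow>
     P2_feasible R11 R22 R12 N0 P1max P2max \<tau>1 P1 u1 P2 u2 \<and>
     (\<forall>P1' u1' P2' u2'. P2_feasible R11 R22 R12 N0 P1max P2max \<tau>1 P1' u1' P2' u2' \<longrightarrow>
        ER2 R11 R22 R21 N0 P1' u1' P2' u2' \<le> ER2 R11 R22 R21 N0 P1 u1 P2 u2)"

end

theory Submission
  imports Defs
begin


lemma herm_form_mv: "herm_form A x y = cdot x (A *v y)"
  by (simp add: herm_form_def cdot_def matrix_vector_mult_def sum_distrib_left mult.assoc)

lemma herm_form_zero[simp]: "herm_form A 0 0 = 0"
  by (simp add: herm_form_def)

lemma pd_nonneg: "hermitian_pd A \<Longrightarrow> Re (herm_form A x x) \<ge> 0"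
  unfolding hermitian_pd_def by (cases "x = 0") (auto intro: less_imp_le)

lemma herm_form_scale: "herm_form A (c *\<^sub>R x) (c *\<^sub>R x) = (c\<^sup>2) * herm_form A x x"
  by (simp add: herm_form_def sum_distrib_left power2_eq_square) (simp add: scaleR_conv_of_real ac_simps)

lemma pd_invertible:
  assumes "hermitian_pd R" shows "invertible R"
proof -
  have "\<forall>x. R *v x = 0 \<longrightarrow> x = 0"
  proof (intro allI impI)
    fix x assume "R *v x = 0"
    then have "herm_form R x x = 0" by (simp add: herm_form_mv cdot_def)
    then show "x = 0" using assms unfolding hermitian_pd_def by force
  qed
  then show ?thesis using matrix_left_invertible_ker invertible_left_inverse by blast
qed

lemma matrix_inv_props:
  fixes R :: "complex^'m^'m"
  assumes "invertible R" shows "R ** matrix_inv R = mat 1" "matrix_inv R ** R = mat 1"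
  using assms unfolding invertible_def matrix_inv_def by (metis (mono_tags, lifting) someI_ex)+

lemma herm_swap:
  assumes "hermitian R"
  shows "cdot (R *v y) y = herm_form R y y"
proof -
  have "cdot (R *v y) y = (\<Sum>i\<in>UNIV. \<Sum>j\<in>UNIV. cnj (R$i$j) * cnj (y$j) * y$i)"
    by (simp add: cdot_def matrix_vector_mult_def sum_distrib_right)
  also have "\<dots> = (\<Sum>i\<in>UNIV. \<Sum>j\<in>UNIV. cnj (y$j) * R$j$i * y$i)"
    using assms unfolding hermitian_def
    by (intro sum.cong refl) (metis complex_cnj_cnj mult.commute)
  also have "\<dots> = herm_form R y y"
    unfolding herm_form_def by (rule sum.swap)
  finally show ?thesis .
qed

lemma pd_inv_pos:
  assumes "hermitian_pd R" "x \<noteq> 0"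
  shows "Re (herm_form (matrix_inv R) x x) > 0"
proof -
  have inv: "invertible R" using pd_invertible assms(1) .
  define y where "y = matrix_inv R *v x"
  have xy: "R *v y = x" unfolding y_def
    using matrix_inv_props(1)[OF inv] by (simp add: matrix_vector_mul_assoc)
  have "y \<noteq> 0" using xy assms(2) by auto
  have "herm_form (matrix_inv R) x x = cdot x y"
    by (simp add: herm_form_mv y_def)
  also have "\<dots> = cdot (R *v y) y" by (simp add: xy)
  also have "\<dots> = herm_form R y y" using assms(1) herm_swap hermitian_pd_def by blast
  finally show ?thesis using \<open>y \<noteq> 0\<close> assms(1) unfolding hermitian_pd_def by auto
qed

lemma cont_herm: "continuous_on UNIV (\<lambda>x. Re (herm_form A x x))"
  unfolding herm_form_def by (intro continuous_intros)

lemma herm_lower: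
  fixes A :: "complex^'m^'m"
  assumes "\<And>x. x \<noteq> 0 \<Longrightarrow> Re (herm_form A x x) > 0"
  shows "\<exists>l>0. \<forall>x. Re (herm_form A x x) \<ge> l * (norm x)\<^sup>2"
proof -
  have "sphere (0::complex^'m) 1 \<noteq> {}"
    by (simp add: vector_choose_size)
  then obtain z where z: "z \<in> sphere 0 1" "\<forall>y\<in>sphere 0 1. Re (herm_form A z z) \<le> Re (herm_form A y y)"
    using continuous_attains_inf[OF compact_sphere[of 0 1], of "\<lambda>x. Re (herm_form A x x)"]
      continuous_on_subset[OF cont_herm] by blast
  have "z \<noteq> 0" using z(1) by auto
  then have zpos: "Re (herm_form A z z) > 0" using assms[of z] by auto
  show ?thesis
  proof (intro exI[of _ "Re (herm_form A z z)"] conjI allI zpos)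
    fix x :: "complex^'m"
    show "Re (herm_form A z z) * (norm x)\<^sup>2 \<le> Re (herm_form A x x)"
    proof (cases "x = 0")
      case True then show ?thesis by simp
    next
      case False
      let ?y = "(1/norm x) *\<^sub>R x"
      have "?y \<in> sphere 0 1" using False by simp
      then have "Re (herm_form A z z) \<le> Re (herm_form A ?y ?y)" using z by blast
      also have "\<dots> = Re (herm_form A x x) / (norm x)\<^sup>2"
        by (simp add: herm_form_scale power_divide)
      finally show ?thesis using False by (simp add: field_simps)
    qed
  qed
qed

lemma herm_upper:
  fixes A :: "complex^'m^'m"
  shows "\<exists>L>0. \<forall>x. Re (herm_form A x x) \<le> L * (norm x)\<^sup>2"
proof -
  have "sphere (0::complex^'m) 1 \<noteq> {}"
    by (simp add: vector_choose_size)
  then obtain z where z: "z \<in> sphere 0 1" "\<forall>y\<in>sphere 0 1. Re (herm_form A y y) \<le> Re (herm_form A z z)"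
    using continuous_attains_sup[OF compact_sphere[of 0 1], of "\<lambda>x. Re (herm_form A x x)"]
      continuous_on_subset[OF cont_herm] by blast
  define L where "L = max 1 (Re (herm_form A z z))"
  show ?thesis
  proof (intro exI[of _ L] conjI allI)
    show "L > 0" by (simp add: L_def)
    fix x :: "complex^'m"
    show "Re (herm_form A x x) \<le> L * (norm x)\<^sup>2"
    proof (cases "x = 0")
      case True then show ?thesis by simp
    next
      case False
      let ?y = "(1/norm x) *\<^sub>R x"
      have "?y \<in> sphere 0 1" using False by simp
      then have "Re (herm_form A ?y ?y) \<le> Re (herm_form A z z)" using z(2) by blast
      then have "Re (herm_form A ?y ?y) \<le> L" unfolding L_def by linarith
      moreover have "Re (herm_form A ?y ?y) = Re (herm_form A x x) / (norm x)\<^sup>2"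
        by (simp add: herm_form_scale power_divide)
      ultimately show ?thesis using False by (simp add: field_simps)
    qed
  qed
qed


lemma gauss1_finite:
  assumes "l > 0"
  shows "(\<integral>\<^sup>+x. ennreal (exp (- l * x\<^sup>2)) \<partial>(lborel::real measure)) < \<infinity>"
proof -
  define s where "s = sqrt (1 / (2*l))"
  have s2: "s\<^sup>2 = 1/(2*l)" using assms by (simp add: s_def)
  have eq: "exp (- l * x\<^sup>2) = sqrt (pi / l) * normal_density 0 s x" for x
    using assms by (simp add: normal_density_def s2 real_sqrt_divide field_simps)
  have "(\<integral>\<^sup>+x. ennreal (normal_density 0 s x) \<partial>lborel) = ennreal 1"
    using \<open>0 < l\<close> by (subst nn_integral_eq_integral) (auto simp: s_def intro!: integrable_normal_density integral_normal_density)
  moreover have "(\<integral>\<^sup>+x. ennreal (exp (- l * x\<^sup>2)) \<partial>lborel) = (\<integral>\<^sup>+x. ennreal (sqrt (pi / l)) * ennreal (normal_density 0 s x) \<partial>lborel)"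
  proof (intro nn_integral_cong)
    fix x :: real
    have "ennreal (exp (- l * x\<^sup>2)) = ennreal (sqrt (pi / l) * normal_density 0 s x)"
      by (simp only: eq)
    also have "\<dots> = ennreal (sqrt (pi / l)) * ennreal (normal_density 0 s x)"
      using \<open>0 < l\<close> by (intro ennreal_mult) auto
    finally show "ennreal (exp (- l * x\<^sup>2)) = ennreal (sqrt (pi / l)) * ennreal (normal_density 0 s x)" .
  qed
  ultimately have "(\<integral>\<^sup>+x. ennreal (exp (- l * x\<^sup>2)) \<partial>lborel) = ennreal (sqrt (pi / l))"
    by (simp add: nn_integral_cmult)
  then show ?thesis by simp
qed

lemma norm_sq_basis: "(norm (x::'a::euclidean_space))\<^sup>2 = (\<Sum>b\<in>Basis. (x \<bullet> b)\<^sup>2)"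
  by (simp only: power2_norm_eq_inner) (simp add: euclidean_inner[of x x] power2_eq_square)

lemma gauss_finite:
  assumes "l > 0"
  shows "(\<integral>\<^sup>+x. ennreal (exp (- l * (norm (x::'a::euclidean_space))\<^sup>2)) \<partial>lborel) < \<infinity>"
proof -
  have "(\<integral>\<^sup>+x. ennreal (exp (- l * (norm (x::'a))\<^sup>2)) \<partial>lborel)
      = (\<integral>\<^sup>+x. (\<Prod>b\<in>Basis. ennreal (exp (- l * ((x::'a) \<bullet> b)\<^sup>2))) \<partial>lborel)"
  proof (rule nn_integral_cong)
    fix x :: 'a assume "x \<in> space lborel"
    have "exp (- l * (norm x)\<^sup>2) = (\<Prod>b\<in>Basis. exp (- l * (x \<bullet> b)\<^sup>2))"
      by (simp add: norm_sq_basis sum_distrib_left exp_sum[symmetric] sum_negf)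
    then show "ennreal (exp (- l * (norm x)\<^sup>2)) = (\<Prod>b\<in>Basis. ennreal (exp (- l * (x \<bullet> b)\<^sup>2)))"
      by (simp add: prod_ennreal)
  qed
  also have "\<dots> = (\<Prod>b\<in>(Basis::'a set). (\<integral>\<^sup>+x. ennreal (exp (- l * x\<^sup>2)) \<partial>lborel))"
    by (rule nn_integral_lborel_prod) auto
  also have "\<dots> < \<infinity>"
    using gauss1_finite[OF assms] by (simp add: power_less_top_ennreal)
  finally show ?thesis .
qed


lemma sets_CN[simp, measurable_cong]: "sets (CN R) = sets borel"
  by (simp add: CN_def)

lemma space_CN[simp]: "space (CN R) = UNIV"
  by (simp add: CN_def)

lemma aux_XY: "0 \<le> (X::real) \<Longrightarrow> 0 \<le> Y \<Longrightarrow> 1 + X * Y \<le> (1 + X) * (1 + Y)"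
  by (simp add: algebra_simps)

lemma log2_nonneg: "0 \<le> (x::real) \<Longrightarrow> 0 \<le> log 2 (1 + x)"
  by (subst zero_le_log_cancel_iff) auto

lemma log_bound:
  assumes "l > 0" "a \<ge> 0" "s \<ge> 0"
  shows "1 + log 2 (1 + a * s) \<le> (1 + 2 * a / (l * ln 2)) * exp (l * s / 2)"
proof -
  have "ln (1 + a * s) \<le> a * s" using assms by (intro ln_add_one_self_le_self) auto
  then have "log 2 (1 + a * s) \<le> a * s / ln 2" by (simp add: log_def divide_right_mono)
  also have "a * s / ln 2 = (2 * a / (l * ln 2)) * (l * s / 2)" using assms by (simp add: field_simps)
  finally have "1 + log 2 (1 + a * s) \<le> 1 + (2 * a / (l * ln 2)) * (l * s / 2)" by simp
  also have "\<dots> \<le> (1 + 2 * a / (l * ln 2)) * (1 + l * s / 2)"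
    using assms by (intro aux_XY) auto
  also have "\<dots> \<le> (1 + 2 * a / (l * ln 2)) * exp (l * s / 2)"
    using assms exp_ge_add_one_self[of "l * s / 2"] by (intro mult_left_mono) auto
  finally show ?thesis .
qed

lemma CN_key:
  fixes R :: "complex^'m^'m"
  assumes R: "hermitian_pd R" and a: "a \<ge> 0"
  defines "dens \<equiv> (\<lambda>h. exp (- Re (herm_form (matrix_inv R) h h)) / (pi ^ CARD('m) * Re (det R)))"
  shows "(\<integral>\<^sup>+h. ennreal (dens h) * ennreal (1 + log 2 (1 + a * (norm h)\<^sup>2)) \<partial>lborel) < \<infinity>"
proof (cases "pi ^ CARD('m) * Re (det R) > 0")
  case False
  then have "dens h \<le> 0" for h unfolding dens_def by (simp add: divide_nonneg_nonpos)
  then have "ennreal (dens h) = 0" for h by (simp add: ennreal_eq_0_iff)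
  then show ?thesis by simp
next
  case True
  define D where "D = pi ^ CARD('m) * Re (det R)"
  have D: "D > 0" using True D_def by simp
  obtain l where l: "l > 0" "\<And>x. Re (herm_form (matrix_inv R) x x) \<ge> l * (norm x)\<^sup>2"
    using herm_lower[of "matrix_inv R"] pd_inv_pos[OF R] by blast
  define K where "K = 1 + 2 * a / (l * ln 2)"
  have K: "K > 0" using l a unfolding K_def by (simp add: add_pos_nonneg)
  have pt: "ennreal (dens h) * ennreal (1 + log 2 (1 + a * (norm h)\<^sup>2))
      \<le> ennreal (K / D) * ennreal (exp (- (l/2) * (norm h)\<^sup>2))" for h
  proof -
    have d0: "0 \<le> dens h" unfolding dens_def using D D_def by simp
    have l0: "0 \<le> 1 + log 2 (1 + a * (norm h)\<^sup>2)" using a log2_nonneg[of "a * (norm h)\<^sup>2"] by simp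
    have d1: "dens h \<le> exp (- l * (norm h)\<^sup>2) / D"
      unfolding dens_def D_def[symmetric] using D l(2)[of h] by (simp add: divide_right_mono)
    have l1: "1 + log 2 (1 + a * (norm h)\<^sup>2) \<le> K * exp (l * (norm h)\<^sup>2 / 2)"
      unfolding K_def using log_bound[OF l(1) a, of "(norm h)\<^sup>2"] by simp
    have "dens h * (1 + log 2 (1 + a * (norm h)\<^sup>2)) \<le> (exp (- l * (norm h)\<^sup>2) / D) * (K * exp (l * (norm h)\<^sup>2 / 2))"
      using d0 l0 d1 l1 by (intro mult_mono) auto
    also have "\<dots> = (K / D) * exp (- (l/2) * (norm h)\<^sup>2)"
      by (simp add: field_simps exp_add[symmetric])
    finally show ?thesis using d0 l0 K D by (simp add: ennreal_mult[symmetric])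
  qed
  have "(\<integral>\<^sup>+h. ennreal (dens h) * ennreal (1 + log 2 (1 + a * (norm h)\<^sup>2)) \<partial>lborel)
      \<le> (\<integral>\<^sup>+h. ennreal (K / D) * ennreal (exp (- (l/2) * (norm (h::complex^'m))\<^sup>2)) \<partial>lborel)"
    by (intro nn_integral_mono pt)
  also have "\<dots> = ennreal (K / D) * (\<integral>\<^sup>+h. ennreal (exp (- (l/2) * (norm (h::complex^'m))\<^sup>2)) \<partial>lborel)"
    by (simp add: nn_integral_cmult)
  also have "\<dots> < \<infinity>"
    using gauss_finite[of "l/2", where 'a="complex^'m"] l(1) by (simp add: ennreal_mult_less_top less_top)
  finally show ?thesis .
qed

lemma herm_meas[measurable]: "(\<lambda>h. Re (herm_form A h h)) \<in> borel_measurable borel"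
  by (rule borel_measurable_continuous_onI[OF cont_herm])

lemma dens_meas[measurable]:
  "(\<lambda>h. exp (- Re (herm_form A h h)) / (c::real)) \<in> borel_measurable borel"
  by measurable

lemma CN_props:
  fixes R :: "complex^'m^'m"
  assumes R: "hermitian_pd R" and a: "a \<ge> 0"
  shows "finite_measure (CN R)" "integrable (CN R) (\<lambda>h. log 2 (1 + a * (norm h)\<^sup>2))"
proof -
  let ?d = "\<lambda>h. exp (- Re (herm_form (matrix_inv R) h h)) / (pi ^ CARD('m) * Re (det R))"
  have fin: "(\<integral>\<^sup>+h. ennreal (?d h) * ennreal (1 + log 2 (1 + a * (norm h)\<^sup>2)) \<partial>lborel) < \<infinity>"
    using CN_key[OF R a] by simp
  have "emeasure (CN R) (space (CN R)) = (\<integral>\<^sup>+h. ennreal (?d h) \<partial>lborel)"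
    unfolding CN_def by (subst emeasure_density) auto
  also have "\<dots> \<le> (\<integral>\<^sup>+h. ennreal (?d h) * ennreal (1 + log 2 (1 + a * (norm h)\<^sup>2)) \<partial>lborel)"
  proof (intro nn_integral_mono)
    fix h :: "complex^'m"
    have "1 \<le> ennreal (1 + log 2 (1 + a * (norm h)\<^sup>2))"
      using a log2_nonneg[of "a * (norm h)\<^sup>2"] by (simp add: ennreal_ge_1)
    then have "ennreal (?d h) * 1 \<le> ennreal (?d h) * ennreal (1 + log 2 (1 + a * (norm h)\<^sup>2))"
      by (intro mult_left_mono) auto
    then show "ennreal (?d h) \<le> ennreal (?d h) * ennreal (1 + log 2 (1 + a * (norm h)\<^sup>2))" by simp
  qed
  finally show "finite_measure (CN R)"
    using fin by (intro finite_measureI) (auto simp: top_unique less_top)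
  have "(\<integral>\<^sup>+h. ennreal (log 2 (1 + a * (norm h)\<^sup>2)) \<partial>CN R)
      = (\<integral>\<^sup>+h. ennreal (?d h) * ennreal (log 2 (1 + a * (norm h)\<^sup>2)) \<partial>lborel)"
    unfolding CN_def by (subst nn_integral_density) auto
  also have "\<dots> \<le> (\<integral>\<^sup>+h. ennreal (?d h) * ennreal (1 + log 2 (1 + a * (norm h)\<^sup>2)) \<partial>lborel)"
    using a by (intro nn_integral_mono mult_left_mono ennreal_leI) auto
  finally have "(\<integral>\<^sup>+h. ennreal (log 2 (1 + a * (norm h)\<^sup>2)) \<partial>CN R) < \<infinity>"
    using fin by (rule le_less_trans)
  then show "integrable (CN R) (\<lambda>h. log 2 (1 + a * (norm h)\<^sup>2))"
    using a by (intro integrableI_nonneg AE_I2 log2_nonneg) auto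
qed



lemma mult_lt_top: "(a::ennreal) < \<infinity> \<Longrightarrow> b < \<infinity> \<Longrightarrow> a * b < \<infinity>"
  by (simp add: ennreal_mult_less_top)

lemma int_snd:
  fixes g :: "_ \<Rightarrow> real"
  assumes "finite_measure M1" "finite_measure M2" "integrable M2 g"
  shows "integrable (M1 \<Otimes>\<^sub>M M2) (\<lambda>x. g (snd x))"
proof -
  interpret M1: finite_measure M1 by fact
  interpret M2: finite_measure M2 by fact
  have gm[measurable]: "g \<in> borel_measurable M2" using assms(3) by auto
  have fin: "(\<integral>\<^sup>+y. ennreal (norm (g y)) \<partial>M2) < \<infinity>"
    using assms(3) integrable_iff_bounded by blast
  have "(\<integral>\<^sup>+x. ennreal (norm (g (snd x))) \<partial>(M1 \<Otimes>\<^sub>M M2))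
      = (\<integral>\<^sup>+x. (\<integral>\<^sup>+y. ennreal (norm (g (snd (x,y)))) \<partial>M2) \<partial>M1)"
    by (rule M2.nn_integral_fst[symmetric]) measurable
  also have "\<dots> = (\<integral>\<^sup>+x. (\<integral>\<^sup>+y. ennreal (norm (g y)) \<partial>M2) \<partial>M1)" by simp
  also have "\<dots> = (\<integral>\<^sup>+y. ennreal (norm (g y)) \<partial>M2) * emeasure M1 (space M1)"
    by (simp add: nn_integral_const)
  also have "\<dots> < \<infinity>"
  proof -
    have e: "emeasure M1 (space M1) < \<infinity>" using M1.emeasure_finite[of "space M1"] by (simp add: less_top[symmetric])
    show ?thesis using fin e by (rule mult_lt_top)
  qed
  finally show ?thesis by (intro integrableI_bounded) auto
qed

lemma int_fst:
  fixes g :: "_ \<Rightarrow> real"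
  assumes "finite_measure M1" "finite_measure M2" "integrable M1 g"
  shows "integrable (M1 \<Otimes>\<^sub>M M2) (\<lambda>x. g (fst x))"
proof -
  interpret M1: finite_measure M1 by fact
  interpret M2: finite_measure M2 by fact
  have gm[measurable]: "g \<in> borel_measurable M1" using assms(3) by auto
  have fin: "(\<integral>\<^sup>+y. ennreal (norm (g y)) \<partial>M1) < \<infinity>"
    using assms(3) integrable_iff_bounded by blast
  have "(\<integral>\<^sup>+x. ennreal (norm (g (fst x))) \<partial>(M1 \<Otimes>\<^sub>M M2))
      = (\<integral>\<^sup>+x. (\<integral>\<^sup>+y. ennreal (norm (g (fst (x,y)))) \<partial>M2) \<partial>M1)"
    by (rule M2.nn_integral_fst[symmetric]) measurable
  also have "\<dots> = (\<integral>\<^sup>+x. ennreal (norm (g x)) * emeasure M2 (space M2) \<partial>M1)"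
    by (simp add: nn_integral_const)
  also have "\<dots> = (\<integral>\<^sup>+y. ennreal (norm (g y)) \<partial>M1) * emeasure M2 (space M2)"
    by (simp add: nn_integral_multc)
  also have "\<dots> < \<infinity>"
  proof -
    have e: "emeasure M2 (space M2) < \<infinity>" using M2.emeasure_finite[of "space M2"] by (simp add: less_top[symmetric])
    show ?thesis using fin e by (rule mult_lt_top)
  qed
  finally show ?thesis by (intro integrableI_bounded) auto
qed

lemma AE_fst_pair:
  assumes "finite_measure M1" "finite_measure M2" "AE x in M1. P x"
  shows "AE z in M1 \<Otimes>\<^sub>M M2. P (fst z)"
proof -
  interpret M2: finite_measure M2 by fact
  obtain N where N: "{x \<in> space M1. \<not> P x} \<subseteq> N" "N \<in> null_sets M1"
    using assms(3) unfolding eventually_ae_filter by blast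
  show ?thesis
  proof (rule AE_I[of _ _ "N \<times> space M2"])
    show "{x \<in> space (M1 \<Otimes>\<^sub>M M2). \<not> P (fst x)} \<subseteq> N \<times> space M2"
      using N(1) by (auto simp: space_pair_measure)
    show "emeasure (M1 \<Otimes>\<^sub>M M2) (N \<times> space M2) = 0"
      using N(2) by (subst M2.emeasure_pair_measure_Times) auto
    show "N \<times> space M2 \<in> sets (M1 \<Otimes>\<^sub>M M2)" using N(2) by auto
  qed
qed

lemma AE_snd_pair:
  assumes "finite_measure M1" "finite_measure M2" "AE x in M2. P x"
  shows "AE z in M1 \<Otimes>\<^sub>M M2. P (snd z)"
proof -
  interpret M2: finite_measure M2 by fact
  obtain N where N: "{x \<in> space M2. \<not> P x} \<subseteq> N" "N \<in> null_sets M2"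
    using assms(3) unfolding eventually_ae_filter by blast
  show ?thesis
  proof (rule AE_I[of _ _ "space M1 \<times> N"])
    show "{x \<in> space (M1 \<Otimes>\<^sub>M M2). \<not> P (snd x)} \<subseteq> space M1 \<times> N"
      using N(1) by (auto simp: space_pair_measure)
    show "emeasure (M1 \<Otimes>\<^sub>M M2) (space M1 \<times> N) = 0"
      using N(2) by (subst M2.emeasure_pair_measure_Times) auto
    show "space M1 \<times> N \<in> sets (M1 \<Otimes>\<^sub>M M2)" using N(2) by auto
  qed
qed

lemma CS:
  fixes x y :: "complex^'m"
  shows "(cmod (cdot x y))\<^sup>2 \<le> (norm x)\<^sup>2 * (norm y)\<^sup>2"
proof -
  have "cmod (cdot x y) \<le> (\<Sum>i\<in>UNIV. cmod (x$i) * cmod (y$i))"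
    unfolding cdot_def by (rule order_trans[OF norm_sum]) (simp add: norm_mult)
  also have "\<dots> \<le> L2_set (\<lambda>i. cmod (x$i)) UNIV * L2_set (\<lambda>i. cmod (y$i)) UNIV"
    using L2_set_mult_ineq[of "\<lambda>i. cmod (x$i)" "\<lambda>i. cmod (y$i)" UNIV] by simp
  also have "\<dots> = norm x * norm y" by (simp add: norm_vec_def)
  finally have "cmod (cdot x y) \<le> norm x * norm y" .
  then have "(cmod (cdot x y))\<^sup>2 \<le> (norm x * norm y)\<^sup>2" by (intro power_mono) auto
  then show ?thesis by (simp add: power_mult_distrib)
qed

lemma cdot_self: "cdot (x::complex^'m) x = (norm x)\<^sup>2"
proof -
  have "cdot x x = (\<Sum>i\<in>UNIV. of_real ((cmod (x$i))\<^sup>2))"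
    unfolding cdot_def by (intro sum.cong refl) (metis complex_norm_square mult.commute of_real_power)
  also have "\<dots> = of_real (\<Sum>i\<in>UNIV. (cmod (x$i))\<^sup>2)" by simp
  also have "(\<Sum>i\<in>UNIV. (cmod (x$i))\<^sup>2) = (norm x)\<^sup>2"
    by (simp add: norm_vec_def L2_set_def sum_nonneg)
  finally show ?thesis .
qed

lemma cdot_normalize:
  assumes "(x::complex^'m) \<noteq> 0"
  shows "(cmod (cdot x ((1 / norm x) *\<^sub>R x)))\<^sup>2 = (norm x)\<^sup>2"
proof -
  have "cdot x ((1 / norm x) *\<^sub>R x) = of_real (1 / norm x) * cdot x x"
    by (simp add: cdot_def sum_distrib_left) (simp add: scaleR_conv_of_real ac_simps)
  then show ?thesis using assms by (simp add: cdot_self norm_mult power2_eq_square)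
qed

lemma cont_cdot: "continuous_on UNIV (\<lambda>p. cdot (fst p) (snd p :: complex^'m))"
  unfolding cdot_def by (intro continuous_intros)


lemma meas_rate:
  fixes u1 :: "complex^'m \<Rightarrow> complex^'m" and u2 :: "complex^'n \<Rightarrow> complex^'n"
  assumes [measurable]: "u1 \<in> borel_measurable borel" "u2 \<in> borel_measurable borel"
  shows "(\<lambda>hh. log 2 (1 + P * (cmod (cdot (fst hh) (u1 (fst hh))))\<^sup>2
              / (N0 + Q * Re (herm_form R (u2 (snd hh)) (u2 (snd hh))))))
         \<in> borel_measurable (CN A \<Otimes>\<^sub>M CN B)"
    "(\<lambda>hh. log 2 (1 + P * (cmod (cdot (snd hh) (u2 (snd hh))))\<^sup>2
              / (N0 + Q * Re (herm_form R' (u1 (fst hh)) (u1 (fst hh))))))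
         \<in> borel_measurable (CN A \<Otimes>\<^sub>M CN B)"
proof -
  have c1[measurable]: "(\<lambda>hh. cdot (fst hh) (u1 (fst hh))) \<in> borel_measurable (CN A \<Otimes>\<^sub>M CN B)"
    by (rule borel_measurable_continuous_Pair[OF _ _ cont_cdot]) measurable
  have c2[measurable]: "(\<lambda>hh. cdot (snd hh) (u2 (snd hh))) \<in> borel_measurable (CN A \<Otimes>\<^sub>M CN B)"
    by (rule borel_measurable_continuous_Pair[OF _ _ cont_cdot]) measurable
  have h1[measurable]: "(\<lambda>hh. Re (herm_form R (u2 (snd hh)) (u2 (snd hh)))) \<in> borel_measurable (CN A \<Otimes>\<^sub>M CN B)"
    using measurable_compose[OF _ herm_meas, of "\<lambda>hh. u2 (snd hh)"] by measurable
  have h2[measurable]: "(\<lambda>hh. Re (herm_form R' (u1 (fst hh)) (u1 (fst hh)))) \<in> borel_measurable (CN A \<Otimes>\<^sub>M CN B)"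
    using measurable_compose[OF _ herm_meas, of "\<lambda>hh. u1 (fst hh)"] by measurable
  show "(\<lambda>hh. log 2 (1 + P * (cmod (cdot (fst hh) (u1 (fst hh))))\<^sup>2
              / (N0 + Q * Re (herm_form R (u2 (snd hh)) (u2 (snd hh))))))
         \<in> borel_measurable (CN A \<Otimes>\<^sub>M CN B)" by measurable
  show "(\<lambda>hh. log 2 (1 + P * (cmod (cdot (snd hh) (u2 (snd hh))))\<^sup>2
              / (N0 + Q * Re (herm_form R' (u1 (fst hh)) (u1 (fst hh))))))
         \<in> borel_measurable (CN A \<Otimes>\<^sub>M CN B)" by measurable
qed


lemma log2_mono: "0 \<le> (x::real) \<Longrightarrow> x \<le> y \<Longrightarrow> log 2 (1 + x) \<le> log 2 (1 + y)"
  by simp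

lemma log2_strict: "0 \<le> (x::real) \<Longrightarrow> x < y \<Longrightarrow> log 2 (1 + x) < log 2 (1 + y)"
  by simp

lemma frac_nonneg: "N0 > 0 \<Longrightarrow> (P::real) \<ge> 0 \<Longrightarrow> g \<ge> 0 \<Longrightarrow> Q * q \<ge> 0 \<Longrightarrow> 0 \<le> P * g / (N0 + Q * q)"
  by simp

lemma rate_nonneg: "N0 > 0 \<Longrightarrow> (P::real) \<ge> 0 \<Longrightarrow> g \<ge> 0 \<Longrightarrow> Q * q \<ge> 0 \<Longrightarrow> 0 \<le> log 2 (1 + P * g / (N0 + Q * q))"
  using log2_nonneg frac_nonneg by blast

lemma scale_frac:
  fixes N0 c P Q g q :: real
  assumes "N0 > 0" "c \<ge> 1" "P \<ge> 0" "Q \<ge> 0" "g \<ge> 0" "q \<ge> 0"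
  shows "P * g / (N0 + Q * q) \<le> (c * P) * g / (N0 + (c * Q) * q)"
proof -
  have d1: "N0 + Q * q > 0" using assms by (simp add: add_pos_nonneg)
  have d2: "N0 + (c * Q) * q > 0" using assms by (simp add: add_pos_nonneg)
  have "P * g * (N0 + (c * Q) * q) \<le> (c * P) * g * (N0 + Q * q)"
  proof -
    have "P * g * N0 \<le> c * (P * g * N0)" using mult_right_mono[of 1 c "P*g*N0"] assms by simp
    then show ?thesis by (simp add: algebra_simps)
  qed
  then show ?thesis using d1 d2 by (simp add: divide_le_eq le_divide_eq mult.commute mult.left_commute)
qed

lemma scale_frac_strict:
  fixes N0 c P Q g q :: real
  assumes "N0 > 0" "c > 1" "P \<ge> 0" "Q \<ge> 0" "g \<ge> 0" "q \<ge> 0" "P * g > 0"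
  shows "P * g / (N0 + Q * q) < (c * P) * g / (N0 + (c * Q) * q)"
proof -
  have d1: "N0 + Q * q > 0" using assms by (simp add: add_pos_nonneg)
  have d2: "N0 + (c * Q) * q > 0" using assms by (simp add: add_pos_nonneg)
  have "P * g * (N0 + (c * Q) * q) < (c * P) * g * (N0 + Q * q)"
  proof -
    have "0 < P*g*N0" using assms by simp
    then have "P * g * N0 < c * (P * g * N0)" using mult_strict_right_mono[of 1 c "P*g*N0"] assms by simp
    then show ?thesis by (simp add: algebra_simps)
  qed
  then show ?thesis using d1 d2 by (simp add: divide_less_eq less_divide_eq mult.commute mult.left_commute)
qed

lemma scale_upper:
  fixes N0 c P Q g q :: real
  assumes "N0 > 0" "c \<ge> 1" "P \<ge> 0" "Q \<ge> 0" "g \<ge> 0" "q \<ge> 0"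
  shows "(c * P) * g / (N0 + (c * Q) * q) \<le> c * (P * g / (N0 + Q * q))"
proof -
  have d1: "N0 + Q * q > 0" using assms by (simp add: add_pos_nonneg)
  have "Q * q \<le> c * Q * q" using mult_right_mono[of 1 c "Q*q"] assms by simp
  then have "N0 + Q * q \<le> N0 + (c * Q) * q" by simp
  then have "(c * P) * g / (N0 + (c * Q) * q) \<le> (c * P) * g / (N0 + Q * q)"
    using d1 assms by (intro divide_left_mono) auto
  then show ?thesis by simp
qed

lemma log_scale:
  fixes c t :: real
  assumes "c \<ge> 1" "t \<ge> 0"
  shows "log 2 (1 + c * t) \<le> log 2 c + log 2 (1 + t)"
proof -
  have "1 + c * t \<le> c * (1 + t)" using assms by (simp add: algebra_simps)
  then have "log 2 (1 + c * t) \<le> log 2 (c * (1 + t))"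
    using assms by (subst log_le_cancel_iff) (auto simp: add_pos_nonneg)
  also have "\<dots> = log 2 c + log 2 (1 + t)" using assms by (simp add: log_mult add_pos_nonneg)
  finally show ?thesis .
qed

lemma rate_scale_upper:
  fixes N0 c P Q g q :: real
  assumes "N0 > 0" "c \<ge> 1" "P \<ge> 0" "Q \<ge> 0" "g \<ge> 0" "q \<ge> 0"
  shows "log 2 (1 + (c * P) * g / (N0 + (c * Q) * q)) \<le> log 2 c + log 2 (1 + P * g / (N0 + Q * q))"
proof -
  have "0 \<le> (c * P) * g / (N0 + (c * Q) * q)" using assms by simp
  then have "log 2 (1 + (c * P) * g / (N0 + (c * Q) * q)) \<le> log 2 (1 + c * (P * g / (N0 + Q * q)))"
    using scale_upper[OF assms] by (rule log2_mono)
  also have "\<dots> \<le> log 2 c + log 2 (1 + P * g / (N0 + Q * q))"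
    using assms by (intro log_scale) auto
  finally show ?thesis .
qed

lemma frac_B:
  fixes N0 P P' Q Q' g q q' :: real
  assumes "N0 > 0" "P \<ge> 0" "g \<ge> 0" "Q * q \<ge> 0" "Q' * q' \<ge> 0" "P * (N0 + Q' * q') \<le> P' * N0"
  shows "P * g / (N0 + Q * q) \<le> P' * g / (N0 + Q' * q')"
proof -
  have "P * g / (N0 + Q * q) \<le> P * g / N0"
    using assms by (intro divide_left_mono) (auto simp: add_pos_nonneg)
  also have "\<dots> \<le> P' * g / (N0 + Q' * q')"
  proof -
    have d: "N0 + Q' * q' > 0" using assms by (simp add: add_pos_nonneg)
    have "P * (N0 + Q' * q') * g \<le> P' * N0 * g" using assms by (intro mult_right_mono) auto
    then show ?thesis using d assms by (simp add: divide_le_eq le_divide_eq algebra_simps)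
  qed
  finally show ?thesis .
qed

lemma frac_bound:
  fixes N0 P Q g q G :: real
  assumes "N0 > 0" "P \<ge> 0" "g \<ge> 0" "Q * q \<ge> 0" "g \<le> G"
  shows "P * g / (N0 + Q * q) \<le> (P / N0) * G"
proof -
  have "P * g / (N0 + Q * q) \<le> P * g / N0"
    using assms by (intro divide_left_mono) (auto simp: add_pos_nonneg)
  also have "\<dots> \<le> P * G / N0" using assms by (intro divide_right_mono mult_left_mono) auto
  finally show ?thesis by simp
qed


lemma AE_False_0: "(AE x in M. False) \<Longrightarrow> emeasure M (space M) = 0"
proof -
  assume "AE x in M. False"
  then obtain N where N: "{x \<in> space M. \<not> False} \<subseteq> N" "N \<in> null_sets M" unfolding eventually_ae_filter by blast
  then have "space M \<subseteq> N" by auto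
  then have "space M \<in> null_sets M" using N(2) null_sets_subset by blast
  then show ?thesis by auto
qed

lemma AE_CN_nonzero: "AE h in CN R. h \<noteq> 0"
proof -
  have "AE h in lborel. h \<noteq> (0::complex^'m)" by (rule AE_lborel_singleton)
  then show ?thesis unfolding CN_def by (subst AE_density) (auto elim: eventually_mono)
qed

theorem proposition2:
  fixes R11 R21 :: "complex^'m^'m" and R22 R12 :: "complex^'n^'n"
    and N0 P1max P2max \<tau>1 P1 P2 :: real
    and u1 :: "complex^'m \<Rightarrow> complex^'m" and u2 :: "complex^'n \<Rightarrow> complex^'n"
  assumes "hermitian_pd R11" "hermitian_pd R12" "hermitian_pd R21" "hermitian_pd R22"
    and "N0 > 0" "P1max > 0" "P2max > 0" "\<tau>1 > 0"
    and "(\<integral>h. log 2 (1 + P1max * (norm h)\<^sup>2 / N0) \<partial>CN R11) \<ge> \<tau>1"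
    and "P2_optimal R11 R22 R12 R21 N0 P1max P2max \<tau>1 P1 u1 P2 u2"
  shows "P1 = P1max \<or> P2 = P2max"
proof (rule ccontr)
  assume neg: "\<not> (P1 = P1max \<or> P2 = P2max)"
  note pd11 = assms(1) and pd12 = assms(2) and pd21 = assms(3) and pd22 = assms(4)
  have N0: "N0 > 0" and tau: "\<tau>1 > 0" using assms by auto
  define M where "M = CN R11 \<Otimes>\<^sub>M CN R22"
  have fm11: "finite_measure (CN R11)" using CN_props(1)[OF pd11, of 0] by simp
  have fm22: "finite_measure (CN R22)" using CN_props(1)[OF pd22, of 0] by simp
  have fmM: "finite_measure M" unfolding M_def using finite_measure_pair_measure[OF fm22 fm11] .
  have spM: "space M = UNIV" by (simp add: M_def space_pair_measure)
  define r1 where "r1 = (\<lambda>(a::real) (v::complex^'m \<Rightarrow> complex^'m) (b::real) (w::complex^'n \<Rightarrow> complex^'n) hh.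
     log 2 (1 + a * (cmod (cdot (fst hh) (v (fst hh))))\<^sup>2
                     / (N0 + b * Re (herm_form R12 (w (snd hh)) (w (snd hh))))))"
  define r2 where "r2 = (\<lambda>(a::real) (v::complex^'m \<Rightarrow> complex^'m) (b::real) (w::complex^'n \<Rightarrow> complex^'n) hh.
     log 2 (1 + b * (cmod (cdot (snd hh) (w (snd hh))))\<^sup>2
                     / (N0 + a * Re (herm_form R21 (v (fst hh)) (v (fst hh))))))"
  have ER1_eq: "ER1 R11 R22 R12 N0 a v b w = integral\<^sup>L M (r1 a v b w)" for a v b w
    unfolding ER1_def r1_def M_def by simp
  have ER2_eq: "ER2 R11 R22 R21 N0 a v b w = integral\<^sup>L M (r2 a v b w)" for a v b w
    unfolding ER2_def r2_def M_def by simp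
  have r1_meas: "r1 a v b w \<in> borel_measurable M"
    if "v \<in> borel_measurable borel" "w \<in> borel_measurable borel" for a v b w
    unfolding r1_def M_def using meas_rate(1)[OF that] by simp
  have r2_meas: "r2 a v b w \<in> borel_measurable M"
    if "v \<in> borel_measurable borel" "w \<in> borel_measurable borel" for a v b w
    unfolding r2_def M_def using meas_rate(2)[OF that] by simp
  have r1_nn: "0 \<le> r1 a v b w hh" if "a \<ge> 0" "b \<ge> 0" for a v b w hh
    unfolding r1_def using rate_nonneg[OF N0 that(1)] pd_nonneg[OF pd12] that(2) by simp
  have r2_nn: "0 \<le> r2 a v b w hh" if "a \<ge> 0" "b \<ge> 0" for a v b w hh
    unfolding r2_def using rate_nonneg[OF N0 that(2)] pd_nonneg[OF pd21] that(1) by simp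
  have opt: "P2_feasible R11 R22 R12 N0 P1max P2max \<tau>1 P1 u1 P2 u2"
    "\<And>a v b w. P2_feasible R11 R22 R12 N0 P1max P2max \<tau>1 a v b w \<Longrightarrow>
        ER2 R11 R22 R21 N0 a v b w \<le> ER2 R11 R22 R21 N0 P1 u1 P2 u2"
    using assms(10) unfolding P2_optimal_def by auto
  have P1r: "0 \<le> P1" "P1 \<le> P1max" and P2r: "0 \<le> P2" "P2 \<le> P2max"
    and bf1: "beamformer R11 u1" and bf2: "beamformer R22 u2"
    and ER1ge: "ER1 R11 R22 R12 N0 P1 u1 P2 u2 \<ge> \<tau>1"
    using opt(1) unfolding P2_feasible_def by auto
  have u1m: "u1 \<in> borel_measurable borel" and u2m: "u2 \<in> borel_measurable borel"
    using bf1 bf2 unfolding beamformer_def by auto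
  have P1lt: "P1 < P1max" and P2lt: "P2 < P2max" using neg P1r P2r by auto
  have I1pos: "integral\<^sup>L M (r1 P1 u1 P2 u2) > 0" using ER1ge tau ER1_eq by simp
  have int1: "integrable M (r1 P1 u1 P2 u2)"
    using I1pos not_integrable_integral_eq by fastforce
  have Mnz: "emeasure M (space M) \<noteq> 0"
  proof
    assume "emeasure M (space M) = 0"
    then have "AE x in M. r1 P1 u1 P2 u2 x = 0" by (intro AE_I[of _ _ "space M"]) auto
    then have "integral\<^sup>L M (r1 P1 u1 P2 u2) = integral\<^sup>L M (\<lambda>_. 0)"
      using r1_meas[OF u1m u2m] by (intro integral_cong_AE) auto
    then show False using I1pos by simp
  qed
  have P1pos: "P1 > 0"
  proof (rule ccontr)
    assume "\<not> P1 > 0"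
    then have "P1 = 0" using P1r by simp
    then have "r1 P1 u1 P2 u2 = (\<lambda>_. 0)" unfolding r1_def by (simp add: fun_eq_iff)
    then show False using I1pos by simp
  qed
  show False
  proof (cases "ER2 R11 R22 R21 N0 P1 u1 P2 u2 > 0")
    case True
    have I2pos: "integral\<^sup>L M (r2 P1 u1 P2 u2) > 0" using True ER2_eq by simp
    have int2: "integrable M (r2 P1 u1 P2 u2)"
      using I2pos not_integrable_integral_eq by fastforce
    have P2pos: "P2 > 0"
    proof (rule ccontr)
      assume "\<not> P2 > 0"
      then have "P2 = 0" using P2r by simp
      then have "r2 P1 u1 P2 u2 = (\<lambda>_. 0)" unfolding r2_def by (simp add: fun_eq_iff)
      then show False using I2pos by simp
    qed
    define c where "c = min (P1max / P1) (P2max / P2)"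
    have c1: "c > 1" using P1lt P2lt P1pos P2pos by (simp add: c_def)
    have "c \<le> P1max / P1" by (simp add: c_def)
    then have cP1: "c * P1 \<le> P1max" using P1pos by (simp add: pos_le_divide_eq)
    have "c \<le> P2max / P2" by (simp add: c_def)
    then have cP2: "c * P2 \<le> P2max" using P2pos by (simp add: pos_le_divide_eq)
    have cP1n: "0 \<le> c * P1" and cP2n: "0 \<le> c * P2" using c1 P1r P2r by auto
    have q12: "0 \<le> Re (herm_form R12 x x)" for x using pd_nonneg[OF pd12] .
    have q21: "0 \<le> Re (herm_form R21 x x)" for x using pd_nonneg[OF pd21] .
    have r1_le: "r1 P1 u1 P2 u2 x \<le> r1 (c * P1) u1 (c * P2) u2 x" for x
      unfolding r1_def using scale_frac[OF N0 _ P1r(1) P2r(1) _ q12] c1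
      by (intro log2_mono frac_nonneg[OF N0 P1r(1)]) (auto intro: mult_nonneg_nonneg P2r q12)
    have r1_up: "r1 (c * P1) u1 (c * P2) u2 x \<le> log 2 c + r1 P1 u1 P2 u2 x" for x
      unfolding r1_def using rate_scale_upper[OF N0 _ P1r(1) P2r(1) _ q12] c1 by auto
    have int1': "integrable M (r1 (c * P1) u1 (c * P2) u2)"
    proof (rule Bochner_Integration.integrable_bound[of _ "\<lambda>x. log 2 c + r1 P1 u1 P2 u2 x"])
      show "integrable M (\<lambda>x. log 2 c + r1 P1 u1 P2 u2 x)"
        using int1 finite_measure.integrable_const[OF fmM] by (intro Bochner_Integration.integrable_add)
      show "r1 (c * P1) u1 (c * P2) u2 \<in> borel_measurable M" using r1_meas[OF u1m u2m] .
      show "AE x in M. norm (r1 (c * P1) u1 (c * P2) u2 x) \<le> norm (log 2 c + r1 P1 u1 P2 u2 x)"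
      proof (intro AE_I2)
        fix x
        have "0 \<le> r1 (c * P1) u1 (c * P2) u2 x" using r1_nn cP1n cP2n by blast
        moreover have "0 \<le> log 2 c" using c1 by simp
        ultimately show "norm (r1 (c * P1) u1 (c * P2) u2 x) \<le> norm (log 2 c + r1 P1 u1 P2 u2 x)"
          using r1_up[of x] r1_nn[OF P1r(1) P2r(1)] by simp
      qed
    qed
    have feas': "P2_feasible R11 R22 R12 N0 P1max P2max \<tau>1 (c * P1) u1 (c * P2) u2"
    proof -
      have "\<tau>1 \<le> integral\<^sup>L M (r1 P1 u1 P2 u2)" using ER1ge ER1_eq by simp
      also have "\<dots> \<le> integral\<^sup>L M (r1 (c * P1) u1 (c * P2) u2)"
        using int1 int1' r1_le by (intro integral_mono) auto
      finally show ?thesis unfolding P2_feasible_def using cP1 cP2 cP1n cP2n bf1 bf2 ER1_eq by simp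
    qed
    \<comment> \<open>rate 2 strictly increases\<close>
    have r2_le: "r2 P1 u1 P2 u2 x \<le> r2 (c * P1) u1 (c * P2) u2 x" for x
      unfolding r2_def using scale_frac[OF N0 _ P2r(1) P1r(1) _ q21] c1
      by (intro log2_mono frac_nonneg[OF N0 P2r(1)]) (auto intro: mult_nonneg_nonneg P1r q21)
    have r2_up: "r2 (c * P1) u1 (c * P2) u2 x \<le> log 2 c + r2 P1 u1 P2 u2 x" for x
      unfolding r2_def using rate_scale_upper[OF N0 _ P2r(1) P1r(1) _ q21] c1 by auto
    have r2_eq0: "r2 P1 u1 P2 u2 x = 0" if "r2 (c * P1) u1 (c * P2) u2 x = r2 P1 u1 P2 u2 x" for x
    proof (cases "P2 * (cmod (cdot (snd x) (u2 (snd x))))\<^sup>2 > 0")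
      case True
      have "r2 P1 u1 P2 u2 x < r2 (c * P1) u1 (c * P2) u2 x"
        unfolding r2_def using scale_frac_strict[OF N0 c1 P2r(1) P1r(1) _ q21 True]
        by (intro log2_strict frac_nonneg[OF N0 P2r(1)]) (auto intro: mult_nonneg_nonneg P1r q21)
      then show ?thesis using that by simp
    next
      case False
      then have "P2 * (cmod (cdot (snd x) (u2 (snd x))))\<^sup>2 = 0" using P2r(1)
        by (metis antisym_conv2 zero_le_mult_iff zero_le_power2)
      then show ?thesis unfolding r2_def by (simp only: ) simp
    qed
    have int2': "integrable M (r2 (c * P1) u1 (c * P2) u2)"
    proof (rule Bochner_Integration.integrable_bound[of _ "\<lambda>x. log 2 c + r2 P1 u1 P2 u2 x"])
      show "integrable M (\<lambda>x. log 2 c + r2 P1 u1 P2 u2 x)"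
        using int2 finite_measure.integrable_const[OF fmM] by (intro Bochner_Integration.integrable_add)
      show "r2 (c * P1) u1 (c * P2) u2 \<in> borel_measurable M" using r2_meas[OF u1m u2m] .
      show "AE x in M. norm (r2 (c * P1) u1 (c * P2) u2 x) \<le> norm (log 2 c + r2 P1 u1 P2 u2 x)"
      proof (intro AE_I2)
        fix x
        have "0 \<le> r2 (c * P1) u1 (c * P2) u2 x" using r2_nn cP1n cP2n by blast
        moreover have "0 \<le> log 2 c" using c1 by simp
        ultimately show "norm (r2 (c * P1) u1 (c * P2) u2 x) \<le> norm (log 2 c + r2 P1 u1 P2 u2 x)"
          using r2_up[of x] r2_nn[OF P1r(1) P2r(1)] by simp
      qed
    qed
    have gt: "integral\<^sup>L M (r2 P1 u1 P2 u2) < integral\<^sup>L M (r2 (c * P1) u1 (c * P2) u2)"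
    proof (rule ccontr)
      assume "\<not> ?thesis"
      then have le: "integral\<^sup>L M (r2 (c * P1) u1 (c * P2) u2) \<le> integral\<^sup>L M (r2 P1 u1 P2 u2)" by simp
      let ?d = "\<lambda>x. r2 (c * P1) u1 (c * P2) u2 x - r2 P1 u1 P2 u2 x"
      have intd: "integrable M ?d" using int2 int2' by (intro Bochner_Integration.integrable_diff)
      have "integral\<^sup>L M ?d = integral\<^sup>L M (r2 (c * P1) u1 (c * P2) u2) - integral\<^sup>L M (r2 P1 u1 P2 u2)"
        using int2' int2 by (rule Bochner_Integration.integral_diff)
      moreover have "integral\<^sup>L M ?d \<ge> 0" using r2_le by (intro integral_nonneg_AE AE_I2) auto
      ultimately have "integral\<^sup>L M ?d = 0" using le by simp
      then have "AE x in M. ?d x = 0"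
        using integral_nonneg_eq_0_iff_AE[OF intd] r2_le by (auto intro: AE_I2)
      then have "AE x in M. r2 P1 u1 P2 u2 x = 0" by (auto elim!: eventually_mono intro: r2_eq0)
      then have "integral\<^sup>L M (r2 P1 u1 P2 u2) = integral\<^sup>L M (\<lambda>_. 0)"
        using r2_meas[OF u1m u2m] by (intro integral_cong_AE) auto
      then show False using I2pos by simp
    qed
    have "ER2 R11 R22 R21 N0 (c * P1) u1 (c * P2) u2 \<le> ER2 R11 R22 R21 N0 P1 u1 P2 u2"
      using opt(2)[OF feas'] .
    then show False using gt ER2_eq by simp

  next
    case False
    then have ER2le: "ER2 R11 R22 R21 N0 P1 u1 P2 u2 \<le> 0" by simp
    obtain L where L: "L > 0" "\<And>x. Re (herm_form R12 x x) \<le> L * (norm x)\<^sup>2"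
      using herm_upper[of R12] by blast
    obtain e :: "complex^'n" where e: "norm e = 1" using vector_choose_size[of 1] by auto
    define w where "w = (\<lambda>h::complex^'n. if h = 0 then e else (1 / norm h) *\<^sub>R h)"
    have wn: "norm (w h) = 1" for h unfolding w_def using e by auto
    have wm: "w \<in> borel_measurable borel" unfolding w_def by measurable
    have wg: "(cmod (cdot h (w h)))\<^sup>2 = (if h = 0 then 0 else (norm h)\<^sup>2)" for h
      unfolding w_def by (auto simp: cdot_normalize) (simp add: cdot_def)
    define Q where "Q = min P2max ((P1max - P1) * N0 / (P1 * L))"
    have Qpos: "Q > 0" using P1lt P1pos L N0 assms(7) by (simp add: Q_def)
    have QL: "P1 * (Q * L) \<le> (P1max - P1) * N0"
    proof -
      have "Q \<le> (P1max - P1) * N0 / (P1 * L)" by (simp add: Q_def)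
      then have "Q * (P1 * L) \<le> (P1max - P1) * N0" using P1pos L by (simp add: pos_le_divide_eq)
      then show ?thesis by (simp add: algebra_simps)
    qed
    have QP: "Q \<le> P2max" by (simp add: Q_def)
    have q12: "0 \<le> Re (herm_form R12 x x)" for x using pd_nonneg[OF pd12] .
    have q21: "0 \<le> Re (herm_form R21 x x)" for x using pd_nonneg[OF pd21] .
    have bfw: "beamformer R22 w" unfolding beamformer_def using wm wn by auto
    have r1_le: "r1 P1 u1 P2 u2 x \<le> r1 P1max u1 Q w x" for x
    proof -
      let ?q = "Re (herm_form R12 (w (snd x)) (w (snd x)))"
      have "?q \<le> L" using L(2)[of "w (snd x)"] wn by simp
      then have "P1 * (Q * ?q) \<le> P1 * (Q * L)" using P1r Qpos by (intro mult_left_mono) auto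
      then have "P1 * (N0 + Q * ?q) \<le> P1max * N0" using QL by (simp add: algebra_simps)
      then show ?thesis unfolding r1_def
        by (intro log2_mono frac_nonneg[OF N0 P1r(1)] frac_B[OF N0 P1r(1)])
           (auto intro: mult_nonneg_nonneg P2r q12 Qpos less_imp_le)
    qed
    have int1': "integrable M (r1 P1max u1 Q w)"
    proof (rule Bochner_Integration.integrable_bound[of _ "\<lambda>x. log 2 (1 + (P1max / N0) * (norm (fst x))\<^sup>2)"])
      show "integrable M (\<lambda>x. log 2 (1 + (P1max / N0) * (norm (fst x))\<^sup>2))"
        unfolding M_def using CN_props(2)[OF pd11, of "P1max / N0"] N0 assms(6)
        by (intro int_fst[OF fm11 fm22]) auto
      show "r1 P1max u1 Q w \<in> borel_measurable M" using r1_meas[OF u1m wm] .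
      have "AE x in M. norm (u1 (fst x)) = 1"
        unfolding M_def using bf1 unfolding beamformer_def by (intro AE_fst_pair[OF fm11 fm22]) auto
      then show "AE x in M. norm (r1 P1max u1 Q w x) \<le> norm (log 2 (1 + (P1max / N0) * (norm (fst x))\<^sup>2))"
      proof (rule eventually_mono)
        fix x :: "(complex^'m) \<times> (complex^'n)" assume u: "norm (u1 (fst x)) = 1"
        have g: "(cmod (cdot (fst x) (u1 (fst x))))\<^sup>2 \<le> (norm (fst x))\<^sup>2"
          using CS[of "fst x" "u1 (fst x)"] u by simp
        have "r1 P1max u1 Q w x \<le> log 2 (1 + (P1max / N0) * (norm (fst x))\<^sup>2)"
          unfolding r1_def using assms(6)
          by (intro log2_mono frac_nonneg[OF N0] frac_bound[OF N0 _ _ _ g])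
             (auto intro: mult_nonneg_nonneg q12 Qpos less_imp_le)
        moreover have "0 \<le> r1 P1max u1 Q w x" using r1_nn assms(6) Qpos by simp
        moreover have "0 \<le> log 2 (1 + (P1max / N0) * (norm (fst x))\<^sup>2)"
          using N0 assms(6) by (intro log2_nonneg) simp
        ultimately show "norm (r1 P1max u1 Q w x) \<le> norm (log 2 (1 + (P1max / N0) * (norm (fst x))\<^sup>2))"
          by simp
      qed
    qed
    have feas': "P2_feasible R11 R22 R12 N0 P1max P2max \<tau>1 P1max u1 Q w"
    proof -
      have "\<tau>1 \<le> integral\<^sup>L M (r1 P1 u1 P2 u2)" using ER1ge ER1_eq by simp
      also have "\<dots> \<le> integral\<^sup>L M (r1 P1max u1 Q w)"
        using int1 int1' r1_le by (intro integral_mono) auto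
      finally show ?thesis unfolding P2_feasible_def using QP Qpos assms(6) bf1 bfw ER1_eq by simp
    qed
    have r2pos: "r2 P1max u1 Q w x > 0" if "snd x \<noteq> 0" for x
    proof -
      have "0 < Q * (norm (snd x))\<^sup>2 / (N0 + P1max * Re (herm_form R21 (u1 (fst x)) (u1 (fst x))))"
        using that Qpos N0 assms(6) q21 by (intro divide_pos_pos mult_pos_pos add_pos_nonneg) auto
      then show ?thesis unfolding r2_def using wg[of "snd x"] that by simp
    qed
    have int2': "integrable M (r2 P1max u1 Q w)"
    proof (rule Bochner_Integration.integrable_bound[of _ "\<lambda>x. log 2 (1 + (Q / N0) * (norm (snd x))\<^sup>2)"])
      show "integrable M (\<lambda>x. log 2 (1 + (Q / N0) * (norm (snd x))\<^sup>2))"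
        unfolding M_def using CN_props(2)[OF pd22, of "Q / N0"] N0 Qpos
        by (intro int_snd[OF fm11 fm22]) auto
      show "r2 P1max u1 Q w \<in> borel_measurable M" using r2_meas[OF u1m wm] .
      show "AE x in M. norm (r2 P1max u1 Q w x) \<le> norm (log 2 (1 + (Q / N0) * (norm (snd x))\<^sup>2))"
      proof (rule AE_I2)
        fix x :: "(complex^'m) \<times> (complex^'n)"
        have g: "(cmod (cdot (snd x) (w (snd x))))\<^sup>2 \<le> (norm (snd x))\<^sup>2" using wg[of "snd x"] by simp
        have "r2 P1max u1 Q w x \<le> log 2 (1 + (Q / N0) * (norm (snd x))\<^sup>2)"
          unfolding r2_def using Qpos
          by (intro log2_mono frac_nonneg[OF N0] frac_bound[OF N0 _ _ _ g])
             (auto intro: mult_nonneg_nonneg q21 less_imp_le assms(6))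
        moreover have "0 \<le> r2 P1max u1 Q w x" using r2_nn assms(6) Qpos by simp
        moreover have "0 \<le> log 2 (1 + (Q / N0) * (norm (snd x))\<^sup>2)"
          using N0 Qpos by (intro log2_nonneg) simp
        ultimately show "norm (r2 P1max u1 Q w x) \<le> norm (log 2 (1 + (Q / N0) * (norm (snd x))\<^sup>2))"
          by simp
      qed
    qed
    have I2n: "integral\<^sup>L M (r2 P1max u1 Q w) > 0"
    proof (rule ccontr)
      assume "\<not> ?thesis"
      moreover have "integral\<^sup>L M (r2 P1max u1 Q w) \<ge> 0"
        using r2_nn assms(6) Qpos by (intro integral_nonneg_AE AE_I2) auto
      ultimately have "integral\<^sup>L M (r2 P1max u1 Q w) = 0" by simp
      then have z: "AE x in M. r2 P1max u1 Q w x = 0"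
        using integral_nonneg_eq_0_iff_AE[OF int2'] r2_nn assms(6) Qpos by (auto intro: AE_I2)
      have nz: "AE x in M. snd x \<noteq> 0"
        unfolding M_def by (intro AE_snd_pair[OF fm11 fm22] AE_CN_nonzero)
      have "AE x in M. False" using z nz
      proof eventually_elim
        case (elim x)
        then show False using r2pos[of x] by simp
      qed
      then show False using AE_False_0 Mnz by blast
    qed
    have "ER2 R11 R22 R21 N0 P1max u1 Q w \<le> ER2 R11 R22 R21 N0 P1 u1 P2 u2"
      using opt(2)[OF feas'] .
    then show False using I2n ER2_eq ER2le by simp
  qed
qed


end
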